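(* Let $f\in C^\infty([0,\infty))$ be any solution of \[ f''(y)+\left(\frac{2}{y}-\frac{y}{2}\right)f'(y)-\frac{1}{y^2}\sin(2f(y))=0\ \ (y>0),\qquad f(0)=0,\qquad \lim_{y\to\infty}f(y)\ \text{exists and is finite}. \] Then $f^{(2k)}(0)=0$ for all $k\in\mathbb N_0$, and for each $k\in\mathbb N$ there exists a constant $C_k>0$ such that $\lvert f^{(k)}(y)\rvert\le C_k\,y^{-2-k}$ for all $y\ge 1$. *)

theory Defs
  imports Complex_Main
begin

text \<open>C-infinity on the closed half-line [0,infinity): D is the sequence of derivatives
  of D 0, where the derivative at y = 0 is one-sided (taken within {0..}).
  D k is then the k-th derivative of D 0 on [0,infinity), uniquely determined there.\<close>
definition smooth_derivs_halfline :: "(nat \<Rightarrow> real \<Rightarrow> real) \<Rightarrow> bool" where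
  "smooth_derivs_halfline D \<longleftrightarrow>
     (\<forall>k. \<forall>y\<ge>0. (D k has_real_derivative D (Suc k) y) (at y within {0..}))"

end

theory Submission
  imports Defs
begin


lemma leibniz_sum_id:
  fixes F G :: "nat \<Rightarrow> real"
  shows "(\<Sum>l\<le>n. of_nat (n choose l) * (F (Suc l) * G (n - l) + F l * G (Suc (n - l))))
       = (\<Sum>l\<le>Suc n. of_nat (Suc n choose l) * F l * G (Suc n - l))"
proof -
  have R: "(\<Sum>l\<le>Suc n. of_nat (Suc n choose l) * F l * G (Suc n - l))
     = F 0 * G (Suc n) + (\<Sum>l\<le>n. (of_nat (n choose l) + of_nat (n choose Suc l)) * F (Suc l) * G (n - l))"
    by (subst sum.atMost_Suc_shift) simp
  have L2: "(\<Sum>l\<le>n. of_nat (n choose l) * (F l * G (Suc (n - l))))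
      = F 0 * G (Suc n) + (\<Sum>l\<le>n. of_nat (n choose Suc l) * (F (Suc l) * G (n - l)))"
  proof (cases n)
    case 0 then show ?thesis by simp
  next
    case (Suc m)
    have "(\<Sum>l\<le>n. of_nat (n choose l) * (F l * G (Suc (n - l))))
        = F 0 * G (Suc n) + (\<Sum>l\<le>m. of_nat (n choose Suc l) * (F (Suc l) * G (Suc (n - Suc l))))"
      unfolding Suc by (subst sum.atMost_Suc_shift) simp
    also have "(\<Sum>l\<le>m. of_nat (n choose Suc l) * (F (Suc l) * G (Suc (n - Suc l))))
       = (\<Sum>l\<le>n. of_nat (n choose Suc l) * (F (Suc l) * G (n - l)))"
      unfolding Suc by (simp add: Suc_diff_le binomial_eq_0)
    finally show ?thesis .
  qed
  show ?thesis
    unfolding R distrib_left sum.distrib L2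
    by (simp add: algebra_simps sum.distrib)
qed

lemma leibniz:
  fixes F G :: "nat \<Rightarrow> real \<Rightarrow> real"
  assumes "\<And>k. k \<le> n \<Longrightarrow> (F k has_real_derivative F (Suc k) x) (at x within S)"
    and "\<And>k. k \<le> n \<Longrightarrow> (G k has_real_derivative G (Suc k) x) (at x within S)"
  shows "((\<lambda>y. \<Sum>l\<le>n. of_nat (n choose l) * F l y * G (n - l) y) has_real_derivative
          (\<Sum>l\<le>Suc n. of_nat (Suc n choose l) * F l x * G (Suc n - l) x)) (at x within S)"
proof -
  have "((\<lambda>y. \<Sum>l\<le>n. of_nat (n choose l) * F l y * G (n - l) y) has_real_derivative
          (\<Sum>l\<le>n. of_nat (n choose l) * (F (Suc l) x * G (n - l) x + F l x * G (Suc (n - l)) x))) (at x within S)"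
  proof (rule DERIV_sum)
    fix l assume "l \<in> {..n}"
    then have l: "l \<le> n" by simp
    have "((\<lambda>y. F l y * G (n - l) y) has_real_derivative F (Suc l) x * G (n - l) x + F l x * G (Suc (n - l)) x) (at x within S)"
      using DERIV_mult[OF assms(1)[OF l] assms(2)[of "n - l"]] l by (simp add: algebra_simps)
    then show "((\<lambda>y. of_nat (n choose l) * F l y * G (n - l) y) has_real_derivative
          of_nat (n choose l) * (F (Suc l) x * G (n - l) x + F l x * G (Suc (n - l)) x)) (at x within S)"
      by (subst mult.assoc) (rule DERIV_cmult)
  qed
  then show ?thesis using leibniz_sum_id[of n "\<lambda>l. F l x" "\<lambda>l. G l x"]
    by (simp add: mult.assoc)
qed



fun W :: "(nat \<Rightarrow> real \<Rightarrow> real) \<Rightarrow> bool \<Rightarrow> nat \<Rightarrow> real \<Rightarrow> real" where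
  "W D b 0 y = (if b then sin (2 * D 0 y) else cos (2 * D 0 y))"
| "W D b (Suc j) y = (if b then 2 else -2) *
     (\<Sum>l\<le>j. of_nat (j choose l) * D (Suc l) y * W D (\<not> b) (j - l) y)"

lemma W_deriv:
  assumes smooth: "smooth_derivs_halfline D" and y: "y \<ge> 0"
  shows "k \<le> j \<Longrightarrow> (W D b k has_real_derivative W D b (Suc k) y) (at y within {0..})"
proof (induction j arbitrary: b k)
  case 0
  have d: "(D 0 has_real_derivative D 1 y) (at y within {0..})"
    using smooth y unfolding smooth_derivs_halfline_def by auto
  show ?case using 0
    by (cases b) (auto intro!: derivative_eq_intros d simp: algebra_simps)
next
  case (Suc j)
  show ?case
  proof (cases "k \<le> j")
    case True then show ?thesis using Suc by blast
  next
    case False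
    then have k: "k = Suc j" using Suc by simp
    have L: "((\<lambda>y. \<Sum>l\<le>j. of_nat (j choose l) * D (Suc l) y * W D (\<not> b) (j - l) y) has_real_derivative
          (\<Sum>l\<le>Suc j. of_nat (Suc j choose l) * D (Suc l) y * W D (\<not> b) (Suc j - l) y)) (at y within {0..})"
    proof (rule leibniz[of j "\<lambda>l. D (Suc l)" y "{0..}" "W D (\<not> b)"])
      fix k assume "k \<le> j"
      show "(D (Suc k) has_real_derivative D (Suc (Suc k)) y) (at y within {0..})"
        using smooth y unfolding smooth_derivs_halfline_def by blast
      show "(W D (\<not> b) k has_real_derivative W D (\<not> b) (Suc k) y) (at y within {0..})"
        using Suc.IH \<open>k \<le> j\<close> by blast
    qed
    show ?thesis unfolding k W.simps(2)[of D b]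
      by (rule DERIV_cmult[OF L, unfolded W.simps(2)[symmetric]])
  qed
qed



definition AA :: "nat \<Rightarrow> real \<Rightarrow> real" where
  "AA l y = (if l = 0 then y^2 else if l = 1 then 2*y else if l = 2 then 2 else 0)"
definition BB :: "nat \<Rightarrow> real \<Rightarrow> real" where
  "BB l y = (if l = 0 then 2*y - y^3/2 else if l = 1 then 2 - 3*y^2/2
      else if l = 2 then -3*y else if l = 3 then -3 else 0)"

lemma AA_deriv: "(AA l has_real_derivative AA (Suc l) y) (at y within S)"
  unfolding AA_def
  by (cases "l = 0"; cases "l = 1"; cases "l = 2") (auto intro!: derivative_eq_intros)

lemma BB_deriv: "(BB l has_real_derivative BB (Suc l) y) (at y within S)"
  unfolding BB_def
  by (cases "l = 0"; cases "l = 1"; cases "l = 2"; cases "l = 3") (auto intro!: derivative_eq_intros simp: power2_eq_square)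

definition Phi :: "(nat \<Rightarrow> real \<Rightarrow> real) \<Rightarrow> nat \<Rightarrow> real \<Rightarrow> real" where
  "Phi D n y = (\<Sum>l\<le>n. of_nat (n choose l) * AA l y * D (n - l + 2) y)
     + (\<Sum>l\<le>n. of_nat (n choose l) * BB l y * D (n - l + 1) y) - W D True n y"

lemma Phi_deriv:
  assumes smooth: "smooth_derivs_halfline D" and y: "y \<ge> 0"
  shows "(Phi D n has_real_derivative Phi D (Suc n) y) (at y within {0..})"
proof -
  have dD: "\<And>k. (D k has_real_derivative D (Suc k) y) (at y within {0..})"
    using smooth y unfolding smooth_derivs_halfline_def by blast
  have 1: "((\<lambda>y. \<Sum>l\<le>n. of_nat (n choose l) * AA l y * D (n - l + 2) y) has_real_derivative
     (\<Sum>l\<le>Suc n. of_nat (Suc n choose l) * AA l y * D (Suc n - l + 2) y)) (at y within {0..})"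
    using leibniz[of n AA y "{0..}" "\<lambda>k. D (k+2)"] AA_deriv dD by simp
  have 2: "((\<lambda>y. \<Sum>l\<le>n. of_nat (n choose l) * BB l y * D (n - l + 1) y) has_real_derivative
     (\<Sum>l\<le>Suc n. of_nat (Suc n choose l) * BB l y * D (Suc n - l + 1) y)) (at y within {0..})"
    using leibniz[of n BB y "{0..}" "\<lambda>k. D (k+1)"] BB_deriv dD by simp
  have 3: "(W D True n has_real_derivative W D True (Suc n) y) (at y within {0..})"
    using W_deriv[OF smooth y] by blast
  show ?thesis unfolding Phi_def[abs_def]
    using DERIV_diff[OF DERIV_add[OF 1 2] 3] by simp
qed

lemma zero_at_0_by_cont:
  fixes g :: "real \<Rightarrow> real"
  assumes "continuous (at 0 within {0..}) g" and "\<And>y. y > 0 \<Longrightarrow> g y = 0"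
  shows "g 0 = 0"
proof -
  have "(g \<longlongrightarrow> g 0) (at 0 within {0..})" using assms(1) by (simp add: continuous_within)
  then have "(g \<longlongrightarrow> g 0) (at_right 0)"
    by (rule tendsto_within_subset) auto
  moreover have "(g \<longlongrightarrow> 0) (at_right 0)"
    by (rule tendsto_eventually) (auto simp: eventually_at_right_less assms(2) eventually_at_right_field intro: exI[of _ 1])
  ultimately show ?thesis by (simp add: tendsto_unique[OF trivial_limit_at_right_real])
qed

lemma deriv_at_pos:
  assumes "(g has_real_derivative g') (at y within {0..})" "y > (0::real)"
  shows "(g has_real_derivative g') (at y)"
proof -
  have "(g has_real_derivative g') (at y within {0<..})"
    using assms(1) by (rule has_field_derivative_subset) auto
  then show ?thesis using at_within_open[of y "{0<..}"] assms(2) by simp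
qed

lemma Phi_zero:
  assumes smooth: "smooth_derivs_halfline D" and D0: "D 0 = f"
    and ode: "\<And>y. y > 0 \<Longrightarrow>
      D 2 y + (2 / y - y / 2) * D 1 y - sin (2 * f y) / y ^ 2 = 0"
    and init: "f 0 = 0"
  shows "y \<ge> 0 \<Longrightarrow> Phi D n y = 0"
proof (induction n arbitrary: y)
  case 0
  show ?case
  proof (cases "y = 0")
    case True then show ?thesis using init D0 by (simp add: Phi_def AA_def BB_def)
  next
    case False
    then have yp: "y > 0" using 0 by simp
    have "y^2 * D 2 y + (2*y - y^3/2) * D 1 y - sin (2*f y)
       = y^2 * (D 2 y + (2 / y - y / 2) * D 1 y - sin (2 * f y) / y ^ 2)"
      using yp by (simp add: field_simps power2_eq_square power3_eq_cube)
    also have "\<dots> = 0" using ode[OF yp] by simp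
    finally show ?thesis using D0
      by (simp add: Phi_def AA_def BB_def numeral_2_eq_2)
  qed
next
  case (Suc n)
  have pos: "Phi D (Suc n) y = 0" if yp: "y > 0" for y
  proof -
    have "(Phi D n has_real_derivative Phi D (Suc n) y) (at y)"
      using deriv_at_pos[OF Phi_deriv[OF smooth] yp] yp by simp
    then have "((\<lambda>_. 0) has_real_derivative Phi D (Suc n) y) (at y)"
      by (rule has_field_derivative_transform_within_open[of _ _ _ "{0<..}"]) (use yp Suc.IH in auto)
    then show ?thesis using DERIV_const DERIV_unique by blast
  qed
  show ?case
  proof (cases "y = 0")
    case True
    have "continuous (at 0 within {0..}) (Phi D (Suc n))"
      using Phi_deriv[OF smooth, of 0] DERIV_continuous by blast
    then show ?thesis using True zero_at_0_by_cont pos by blast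
  next
    case False then show ?thesis using pos Suc.prems by simp
  qed
qed



lemma W_parity:
  assumes H: "\<And>i. i < n \<Longrightarrow> even i \<Longrightarrow> D i 0 = 0"
  shows "i \<le> n \<Longrightarrow> (odd i \<longrightarrow> W D False i 0 = 0) \<and> (even i \<and> i < n \<longrightarrow> W D True i 0 = 0)"
proof (induction i rule: less_induct)
  case (less i)
  show ?case
  proof (cases i)
    case 0 then show ?thesis using H[of 0] by auto
  next
    case (Suc j)
    have A: "odd (Suc j) \<Longrightarrow> W D False (Suc j) 0 = 0"
    proof -
      assume o: "odd (Suc j)"
      have "\<forall>l\<in>{..j}. of_nat (j choose l) * D (Suc l) 0 * W D True (j - l) 0 = 0"
      proof
        fix l assume l: "l \<in> {..j}"
        show "of_nat (j choose l) * D (Suc l) 0 * W D True (j - l) 0 = 0"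
        proof (cases "even l")
          case True
          then have "W D True (j - l) 0 = 0" using less.IH[of "j - l"] l o Suc less.prems by auto
          then show ?thesis by simp
        next
          case False
          then have "D (Suc l) 0 = 0" using H[of "Suc l"] l o Suc less.prems by (cases "l = j") auto
          then show ?thesis by simp
        qed
      qed
      from sum.neutral[OF this] show ?thesis by simp
    qed
    have B: "even (Suc j) \<Longrightarrow> Suc j < n \<Longrightarrow> W D True (Suc j) 0 = 0"
    proof -
      assume o: "even (Suc j)" and lt: "Suc j < n"
      have "\<forall>l\<in>{..j}. of_nat (j choose l) * D (Suc l) 0 * W D False (j - l) 0 = 0"
      proof
        fix l assume l: "l \<in> {..j}"
        show "of_nat (j choose l) * D (Suc l) 0 * W D False (j - l) 0 = 0"
        proof (cases "even l")
          case True
          then have "W D False (j - l) 0 = 0" using less.IH[of "j - l"] l o Suc less.prems by auto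
          then show ?thesis by simp
        next
          case False
          then have "D (Suc l) 0 = 0" using H[of "Suc l"] l o lt by auto
          then show ?thesis by simp
        qed
      qed
      from sum.neutral[OF this] show ?thesis by simp
    qed
    show ?thesis using A B Suc by auto
  qed
qed

lemma W_even_n:
  assumes H: "\<And>i. i < n \<Longrightarrow> even i \<Longrightarrow> D i 0 = 0" and n: "even n" "n \<ge> 2"
  shows "W D True n 0 = 2 * D n 0"
proof -
  obtain j where j: "n = Suc (Suc j)" using n by (metis add_2_eq_Suc le_Suc_ex)
  have oj: "odd (Suc j)" using n j by simp
  have z: "\<forall>l\<in>{..j}. of_nat (Suc j choose l) * D (Suc l) 0 * W D False (Suc j - l) 0 = 0"
  proof
    fix l assume l: "l \<in> {..j}"
    show "of_nat (Suc j choose l) * D (Suc l) 0 * W D False (Suc j - l) 0 = 0"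
    proof (cases "even l")
      case True
      then have "odd (Suc j - l)" using oj l by auto
      then have "W D False (Suc j - l) 0 = 0" using W_parity[of n D, OF H, of "Suc j - l"] j by auto
      then show ?thesis by simp
    next
      case False
      then have "D (Suc l) 0 = 0" using H[of "Suc l"] l j by auto
      then show ?thesis by simp
    qed
  qed
  have "W D True n 0 = 2 * (\<Sum>l\<le>Suc j. of_nat (Suc j choose l) * D (Suc l) 0 * W D False (Suc j - l) 0)"
    unfolding j by simp
  also have "\<dots> = 2 * D n 0 * cos (2 * D 0 0)"
    using sum.neutral[OF z] j by (simp add: sum.atMost_Suc)
  also have "D 0 0 = 0" using H[of 0] n by auto
  finally show ?thesis by simp
qed

lemma even_derivs_zero:
  assumes smooth: "smooth_derivs_halfline D" and D0: "D 0 = f"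
    and ode: "\<And>y. y > 0 \<Longrightarrow>
      D 2 y + (2 / y - y / 2) * D 1 y - sin (2 * f y) / y ^ 2 = 0"
    and init: "f 0 = 0"
  shows "even n \<Longrightarrow> D n 0 = 0"
proof (induction n rule: less_induct)
  case (less n)
  show ?case
  proof (cases "n = 0")
    case True then show ?thesis using D0 init by simp
  next
    case False
    then have n2: "n \<ge> 2" using less.prems by presburger
    have H: "\<And>i. i < n \<Longrightarrow> even i \<Longrightarrow> D i 0 = 0" using less.IH by blast
    have P: "Phi D n 0 = 0" using Phi_zero[OF smooth D0 ode init] by simp
    have s1: "(\<Sum>l\<le>n. of_nat (n choose l) * AA l 0 * D (n - l + 2) 0)
        = (\<Sum>l\<le>n. if l = 2 then of_nat (n choose 2) * 2 * D n 0 else 0)"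
      by (rule sum.cong) (use n2 in \<open>auto simp: AA_def Suc_diff_Suc numeral_2_eq_2\<close>)
    have Dn2: "D (n - 2) 0 = 0" using H[of "n-2"] n2 less.prems by auto
    have s2: "(\<Sum>l\<le>n. of_nat (n choose l) * BB l 0 * D (n - l + 1) 0)
        = (\<Sum>l\<le>n. if l = 1 then of_nat n * 2 * D n 0 else 0)"
    proof (rule sum.cong)
      fix l assume "l \<in> {..n}"
      show "of_nat (n choose l) * BB l 0 * D (n - l + 1) 0 = (if l = 1 then of_nat n * 2 * D n 0 else 0)"
      proof (cases "l = 3")
        case True
        then show ?thesis using Dn2 \<open>l \<in> {..n}\<close>
          by (auto simp: BB_def numeral_3_eq_3 numeral_2_eq_2 Suc_diff_Suc)
      qed (use n2 in \<open>auto simp: BB_def\<close>)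
    qed simp
    have "0 = of_nat (n choose 2) * 2 * D n 0 + of_nat n * 2 * D n 0 - 2 * D n 0"
      using P W_even_n[of n D, OF H less.prems n2] n2 unfolding Phi_def s1 s2 by simp
    then have "D n 0 * (of_nat (n choose 2) * 2 + (2 * of_nat n - 2)) = 0"
      by (simp add: algebra_simps)
    moreover have "of_nat (n choose 2) * 2 + (2 * of_nat n - 2) > (0::real)"
      using n2 by simp
    ultimately show ?thesis by simp
  qed
qed



lemma phi_deriv:
  assumes x: "x > (0::real)"
  shows "((\<lambda>y. exp (-(y^2/4)) / y^m) has_real_derivative
     (- (x/2) * exp (-(x^2/4)) / x^m - real m * exp (-(x^2/4)) / x^(Suc m))) (at x)"
proof -
  have "((\<lambda>y. exp (-(y^2/4)) / y^m) has_real_derivative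
     ((exp (-(x^2/4)) * (- (2 * x / 4))) * x^m - exp (-(x^2/4)) * (real m * x^(m - 1))) / (x^m * x^m)) (at x)"
    using x by (auto intro!: derivative_eq_intros simp: power2_eq_square)
  moreover have "((exp (-(x^2/4)) * (- (2 * x / 4))) * x^m - exp (-(x^2/4)) * (real m * x^(m - 1))) / (x^m * x^m)
     = (- (x/2) * exp (-(x^2/4)) / x^m - real m * exp (-(x^2/4)) / x^(Suc m))"
  proof (cases m)
    case 0 then show ?thesis by simp
  next
    case (Suc k)
    then show ?thesis using x by (simp add: field_simps power_Suc)
  qed
  ultimately show ?thesis by simp
qed

lemma compare_upper:
  fixes g r G :: "real \<Rightarrow> real" and M B Y :: real and m :: nat
  assumes dg: "\<And>y. y \<ge> 1 \<Longrightarrow> (g has_real_derivative ((y/2 - 2/y) * g y + r y)) (at y)"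
    and dG: "\<And>y. y \<ge> 1 \<Longrightarrow> (G has_real_derivative g y) (at y)"
    and rb: "\<And>y. y \<ge> 1 \<Longrightarrow> r y \<ge> - M / y^(Suc m)"
    and Gb: "\<And>y. y \<ge> Y \<Longrightarrow> G y \<le> B"
    and M: "M \<ge> 0"
    and y: "y \<ge> 1"
  shows "g y \<le> 2*M / y^(Suc (Suc m))"
proof (rule ccontr)
  define E where "E y = exp (-(y^2/4))" for y :: real
  define h where "h y = y^2 * E y * g y - 2*M * (E y / y^m)" for y
  assume "\<not> ?thesis"
  then have gy: "g y > 2*M / y^(Suc (Suc m))" by simp
  have hd: "(h has_real_derivative (x^2 * E x * r x + M * x * E x / x^m + 2*M*real m*E x / x^(Suc m))) (at x)"
    if x: "x \<ge> 1" for x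
  proof -
    have x0: "x > 0" using x by simp
    have d1: "((\<lambda>x. x^2 * E x) has_real_derivative (2*x*E x + x^2 * (E x * (-(2*x/4))))) (at x)"
      unfolding E_def by (auto intro!: derivative_eq_intros simp: power2_eq_square)
    have d3: "((\<lambda>x. 2*M * (E x / x^m)) has_real_derivative
        2*M*(- (x/2) * E x / x^m - real m * E x / x^(Suc m))) (at x)"
      unfolding E_def by (rule DERIV_cmult[OF phi_deriv[OF x0, of m]])
    have d: "(h has_real_derivative ((2*x*E x + x^2 * (E x * (-(2*x/4)))) * g x + ((x/2 - 2/x) * g x + r x) * (x^2 * E x)
        - 2*M*(- (x/2) * E x / x^m - real m * E x / x^(Suc m)))) (at x)"
      unfolding h_def[abs_def] using DERIV_diff[OF DERIV_mult[OF d1 dg[OF x]] d3] by simp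
    show ?thesis
      by (rule DERIV_cong[OF d]) (use x0 in \<open>simp add: field_simps power2_eq_square\<close>)
  qed
  have hd_nonneg: "x^2 * E x * r x + M * x * E x / x^m + 2*M*real m*E x / x^(Suc m) \<ge> 0"
    if x: "x \<ge> 1" for x
  proof -
    have x0: "x > 0" using x by simp
    have Ep: "E x > 0" unfolding E_def by simp
    have "x^2 * E x * r x \<ge> x^2 * E x * (- M / x^(Suc m))"
      using rb[OF x] Ep x0 by (intro mult_left_mono) auto
    also have "x^2 * E x * (- M / x^(Suc m)) = - (M * x * E x / x^m)"
      using x0 by (simp add: field_simps power2_eq_square)
    finally have "x^2 * E x * r x + M * x * E x / x^m \<ge> 0" by simp
    moreover have "2*M*real m*E x / x^(Suc m) \<ge> 0" using M Ep x0 by simp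
    ultimately show ?thesis by linarith
  qed
  have hmono: "h y \<le> h z" if "z \<ge> y" for z
    using that y by (intro DERIV_nonneg_imp_nondecreasing[OF that]) (meson hd hd_nonneg order_trans)
  have y0: "y > 0" using y by simp
  have Ey: "E y > 0" unfolding E_def by simp
  have "h y > 0"
  proof -
    have "y^2 * E y * g y > y^2 * E y * (2*M / y^(Suc (Suc m)))"
      using gy Ey y0 by (intro mult_strict_left_mono) auto
    also have "y^2 * E y * (2*M / y^(Suc (Suc m))) = 2*M * (E y / y^m)"
      using y0 by (simp add: field_simps power2_eq_square)
    finally show ?thesis unfolding h_def by simp
  qed
  define \<delta> where "\<delta> = h y"
  have dpos: "\<delta> > 0" using \<open>h y > 0\<close> \<delta>_def by simp
  have glow: "g z \<ge> \<delta>/4" if z: "z \<ge> y" for z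
  proof -
    have z0: "z > 0" using z y by simp
    have Ez: "E z > 0" unfolding E_def by simp
    have "\<delta> \<le> z^2 * E z * g z - 2*M * (E z / z^m)" using hmono[OF z] by (simp only: h_def \<delta>_def)
    then have "z^2 * E z * g z \<ge> \<delta> + 2*M * (E z / z^m)" by linarith
    moreover have "2*M * (E z / z^m) \<ge> 0" using M Ez z0 by simp
    ultimately have A: "z^2 * E z * g z \<ge> \<delta>" by linarith
    have ex: "exp (z^2/4) \<ge> 1 + z^2/4" by (rule exp_ge_add_one_self)
    have Ei: "E z = inverse (exp (z^2/4))" unfolding E_def by (rule exp_minus)
    have Eq: "z^2 * E z = z^2 / exp (z^2/4)" unfolding Ei by (rule divide_inverse[symmetric])
    have "z^2 < 4 * exp (z^2/4)" using ex by linarith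
    then have q4: "z^2 * E z < 4" unfolding Eq by (subst pos_divide_less_eq) auto
    have qp: "z^2 * E z > 0" using Ez z0 by simp
    show ?thesis
    proof (rule ccontr)
      assume "\<not> g z \<ge> \<delta>/4"
      then have gl: "g z < \<delta>/4" by simp
      show False
      proof (cases "g z > 0")
        case True
        have "z^2 * E z * g z < 4 * g z" using q4 True by (intro mult_strict_right_mono) auto
        then show False using A gl by linarith
      next
        case False
        then have "z^2 * E z * g z \<le> 0" using qp by (simp add: mult_nonneg_nonpos)
        then show False using A dpos by linarith
      qed
    qed
  qed
  define y1 where "y1 = max y Y"
  have Gy1: "G y1 \<le> B" using Gb y1_def by simp
  define z where "z = y1 + 4 * (B - G y1 + 1) / \<delta>"
  have zy1: "z \<ge> y1" unfolding z_def using Gy1 dpos by simp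
  have "G z - \<delta>/4 * z \<ge> G y1 - \<delta>/4 * y1"
  proof (rule DERIV_nonneg_imp_nondecreasing[OF zy1])
    fix x assume x: "y1 \<le> x" "x \<le> z"
    then have "x \<ge> 1" "x \<ge> y" using y y1_def by auto
    then show "\<exists>d. ((\<lambda>x. G x - \<delta>/4 * x) has_real_derivative d) (at x) \<and> d \<ge> 0"
      using glow[of x] by (intro exI[of _ "g x - \<delta>/4"]) (auto intro!: derivative_eq_intros dG)
  qed
  then have "G z \<ge> G y1 + \<delta>/4 * (z - y1)" by (simp add: algebra_simps diff_divide_distrib)
  also have "\<delta>/4 * (z - y1) = B - G y1 + 1" unfolding z_def using dpos by simp
  finally have "G z > B" by simp
  moreover have "z \<ge> Y" using zy1 y1_def by simp
  ultimately show False using Gb by force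
qed

lemma compare_abs:
  fixes g r G :: "real \<Rightarrow> real" and M B Y :: real and m :: nat
  assumes dg: "\<And>y. y \<ge> 1 \<Longrightarrow> (g has_real_derivative ((y/2 - 2/y) * g y + r y)) (at y)"
    and dG: "\<And>y. y \<ge> 1 \<Longrightarrow> (G has_real_derivative g y) (at y)"
    and rb: "\<And>y. y \<ge> 1 \<Longrightarrow> \<bar>r y\<bar> \<le> M / y^(Suc m)"
    and Gb: "\<And>y. y \<ge> Y \<Longrightarrow> \<bar>G y\<bar> \<le> B"
    and M: "M \<ge> 0"
    and y: "y \<ge> 1"
  shows "\<bar>g y\<bar> \<le> 2*M / y^(Suc (Suc m))"
proof -
  have "g y \<le> 2*M / y^(Suc (Suc m))"
    by (rule compare_upper[where Y=Y and B=B, OF dg dG _ _ M y]) (use rb Gb in \<open>force simp: abs_le_iff\<close>)+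
  moreover have "- g y \<le> 2*M / y^(Suc (Suc m))"
  proof (rule compare_upper[where g="\<lambda>y. - g y" and r="\<lambda>y. - r y" and G="\<lambda>y. - G y" and M=M and m=m and Y=Y and B=B, OF _ _ _ _ M y])
    fix x :: real assume x: "x \<ge> 1"
    show "((\<lambda>y. - g y) has_real_derivative (x / 2 - 2 / x) * - g x + - r x) (at x)"
      using DERIV_minus[OF dg[OF x]] by (simp add: algebra_simps)
    show "((\<lambda>y. - G y) has_real_derivative - g x) (at x)"
      using DERIV_minus[OF dG[OF x]] by simp
    show "- M / x ^ Suc m \<le> - r x" using rb[OF x] by (simp add: abs_le_iff)
  next
    fix x :: real assume "x \<ge> Y" then show "- G x \<le> B" using Gb by (force simp: abs_le_iff)
  qed
  ultimately show ?thesis by (simp add: abs_le_iff)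
qed



definition decay :: "(real \<Rightarrow> real) \<Rightarrow> nat \<Rightarrow> bool" where
  "decay g n \<longleftrightarrow> (\<exists>C. \<forall>y\<ge>1. \<bar>g y\<bar> \<le> C / y^n)"

lemma decayE:
  assumes "decay g n"
  obtains C where "C \<ge> 0" "\<And>y. y \<ge> 1 \<Longrightarrow> \<bar>g y\<bar> \<le> C / y^n"
proof -
  obtain C where C: "\<And>y. y \<ge> 1 \<Longrightarrow> \<bar>g y\<bar> \<le> C / y^n" using assms unfolding decay_def by blast
  have "C \<ge> 0" using C[of 1] by simp
  then show ?thesis using C that by blast
qed

lemma decay_mult:
  assumes "decay g a" "decay h b"
  shows "decay (\<lambda>y. g y * h y) (a + b)"
proof -
  obtain C1 where C1: "C1 \<ge> 0" "\<And>y. y \<ge> 1 \<Longrightarrow> \<bar>g y\<bar> \<le> C1 / y^a" using assms(1) by (metis decayE)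
  obtain C2 where C2: "C2 \<ge> 0" "\<And>y. y \<ge> 1 \<Longrightarrow> \<bar>h y\<bar> \<le> C2 / y^b" using assms(2) by (metis decayE)
  have "\<bar>g y * h y\<bar> \<le> (C1 * C2) / y^(a+b)" if y: "y \<ge> 1" for y
  proof -
    have "\<bar>g y * h y\<bar> = \<bar>g y\<bar> * \<bar>h y\<bar>" by (simp add: abs_mult)
    also have "\<dots> \<le> (C1 / y^a) * (C2 / y^b)"
      using C1(2)[OF y] C2(2)[OF y] by (intro mult_mono) auto
    also have "\<dots> = (C1 * C2) / y^(a+b)" by (simp add: power_add)
    finally show ?thesis .
  qed
  then show ?thesis unfolding decay_def by blast
qed

lemma decay_mono:
  assumes "decay g a" "b \<le> a"
  shows "decay g b"
proof -
  obtain C where C: "C \<ge> 0" "\<And>y. y \<ge> 1 \<Longrightarrow> \<bar>g y\<bar> \<le> C / y^a" using assms(1) by (metis decayE)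
  have "\<bar>g y\<bar> \<le> C / y^b" if y: "y \<ge> 1" for y
  proof -
    have "y^b \<le> y^a" using y assms(2) by (intro power_increasing)
    then have "C / y^a \<le> C / y^b" using C(1) y by (intro divide_left_mono) auto
    then show ?thesis using C(2)[OF y] by linarith
  qed
  then show ?thesis unfolding decay_def by blast
qed

lemma decay_add:
  assumes "decay g n" "decay h n"
  shows "decay (\<lambda>y. g y + h y) n"
proof -
  obtain C1 where C1: "\<And>y. y \<ge> 1 \<Longrightarrow> \<bar>g y\<bar> \<le> C1 / y^n" using assms(1) unfolding decay_def by blast
  obtain C2 where C2: "\<And>y. y \<ge> 1 \<Longrightarrow> \<bar>h y\<bar> \<le> C2 / y^n" using assms(2) unfolding decay_def by blast
  have "\<bar>g y + h y\<bar> \<le> (C1 + C2) / y^n" if "y \<ge> 1" for y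
    using C1[OF that] C2[OF that] by (simp add: add_divide_distrib abs_triangle_ineq[THEN order_trans])
  then show ?thesis unfolding decay_def by blast
qed

lemma decay_zero: "decay (\<lambda>y. 0) n"
  unfolding decay_def by (intro exI[of _ 0]) simp

lemma decay_sum:
  assumes "finite I" "\<And>i. i \<in> I \<Longrightarrow> decay (g i) n"
  shows "decay (\<lambda>y. \<Sum>i\<in>I. g i y) n"
  using assms by (induction I rule: finite_induct) (auto intro: decay_add decay_zero)

lemma decay_cmult:
  assumes "decay g n"
  shows "decay (\<lambda>y. c * g y) n"
proof -
  obtain C where C: "\<And>y. y \<ge> 1 \<Longrightarrow> \<bar>g y\<bar> \<le> C / y^n" using assms unfolding decay_def by blast
  have "\<bar>c * g y\<bar> \<le> (\<bar>c\<bar> * C) / y^n" if "y \<ge> 1" for y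
    using C[OF that] by (simp add: abs_mult) (metis abs_ge_zero mult_left_mono times_divide_eq_right)
  then show ?thesis unfolding decay_def by blast
qed

lemma decay_cong:
  assumes "decay g n" "\<And>y. y \<ge> 1 \<Longrightarrow> g y = h y"
  shows "decay h n"
  using assms unfolding decay_def by (metis)

lemma decay_bounded:
  assumes "\<And>y. y \<ge> 1 \<Longrightarrow> \<bar>g y\<bar> \<le> C"
  shows "decay g 0"
  using assms unfolding decay_def by auto

definition PP :: "nat \<Rightarrow> real \<Rightarrow> real" where
  "PP k y = (if k = 0 then y/2 else if k = 1 then 1/2 else 0) + (-2) * (-1)^k * fact k / y^(Suc k)"
definition QQ :: "nat \<Rightarrow> real \<Rightarrow> real" where
  "QQ k y = (-1)^k * fact (Suc k) / y^(Suc (Suc k))"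

lemma inv_pow_deriv:
  assumes "y > (0::real)"
  shows "((\<lambda>y. c / y^n) has_real_derivative (- c * real n / y^(Suc n))) (at y)"
proof -
  have "((\<lambda>y. c / y^n) has_real_derivative (0 * y^n - c * (real n * y^(n - 1))) / (y^n * y^n)) (at y)"
    using assms by (auto intro!: derivative_eq_intros)
  moreover have "(0 * y^n - c * (real n * y^(n - 1))) / (y^n * y^n) = - c * real n / y^(Suc n)"
  proof (cases n)
    case 0 then show ?thesis by simp
  next
    case (Suc k) then show ?thesis using assms by (simp add: field_simps)
  qed
  ultimately show ?thesis by simp
qed

lemma PP_deriv:
  assumes "y > (0::real)"
  shows "(PP k has_real_derivative PP (Suc k) y) (at y)"
proof -
  have "((\<lambda>y. (if k = 0 then y/2 else if k = 1 then 1/2 else 0) + (-2) * (-1)^k * fact k / y^(Suc k))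
     has_real_derivative ((if k = 0 then 1/2 else 0) + (- ((-2) * (-1)^k * fact k) * real (Suc k) / y^(Suc (Suc k))))) (at y)"
    by (intro DERIV_add inv_pow_deriv assms) (auto intro!: derivative_eq_intros)
  moreover have "(if k = 0 then 1/2 else 0) + (- ((-2) * (-1)^k * fact k) * real (Suc k) / y^(Suc (Suc k)))
    = PP (Suc k) y"
    unfolding PP_def by (simp add: algebra_simps)
  ultimately show ?thesis unfolding PP_def[abs_def] by (rule DERIV_cong)
qed

lemma QQ_deriv:
  assumes "y > (0::real)"
  shows "(QQ k has_real_derivative QQ (Suc k) y) (at y)"
proof -
  have "((\<lambda>y. (-1)^k * fact (Suc k) / y^(Suc (Suc k)))
     has_real_derivative (- ((-1)^k * fact (Suc k)) * real (Suc (Suc k)) / y^(Suc (Suc (Suc k))))) (at y)"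
    by (rule inv_pow_deriv[OF assms])
  moreover have "(- ((-1)^k * fact (Suc k)) * real (Suc (Suc k)) / y^(Suc (Suc (Suc k)))) = QQ (Suc k) y"
    unfolding QQ_def by (simp add: algebra_simps)
  ultimately show ?thesis unfolding QQ_def[abs_def] by (rule DERIV_cong)
qed

lemma PP_decay: "l \<ge> 1 \<Longrightarrow> decay (PP l) (l - 1)"
proof -
  assume l: "l \<ge> 1"
  have "\<bar>PP l y\<bar> \<le> (1/2 + 2 * fact l) / y^(l - 1)" if y: "y \<ge> 1" for y
  proof -
    have yp: "y > 0" using y by simp
    have p1: "y^(l-1) \<le> y^(Suc l)" using y by (intro power_increasing) auto
    have p2: "1 \<le> y^(l-1)" using y by simp
    have "\<bar>PP l y\<bar> \<le> \<bar>(if l = 0 then y/2 else if l = 1 then 1/2 else 0)\<bar> + 2 * fact l / y^(Suc l)"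
      unfolding PP_def using yp by (intro order_trans[OF abs_triangle_ineq] add_left_mono) (simp add: abs_mult)
    also have "\<dots> \<le> (1/2) / y^(l-1) + 2 * fact l / y^(l-1)"
    proof (rule add_mono)
      show "\<bar>(if l = 0 then y/2 else if l = 1 then 1/2 else 0)\<bar> \<le> (1/2) / y^(l-1)"
        using l yp by auto
      show "2 * fact l / y^(Suc l) \<le> 2 * fact l / y^(l-1)"
        using p1 p2 by (intro divide_left_mono) auto
    qed
    finally show ?thesis by (simp add: add_divide_distrib)
  qed
  then show ?thesis unfolding decay_def by blast
qed

lemma QQ_decay: "decay (QQ l) (l + 2)"
  unfolding decay_def QQ_def by (intro exI[of _ "fact (Suc l)"]) (auto simp: abs_mult)



definition SS :: "(nat \<Rightarrow> real \<Rightarrow> real) \<Rightarrow> nat \<Rightarrow> real \<Rightarrow> real" where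
  "SS D n y = (\<Sum>l\<le>n. of_nat (n choose l) * PP l y * D (n - l + 1) y)
     + (\<Sum>l\<le>n. of_nat (n choose l) * QQ l y * W D True (n - l) y)"

lemma SS_deriv:
  assumes smooth: "smooth_derivs_halfline D" and y: "y > 0"
  shows "(SS D n has_real_derivative SS D (Suc n) y) (at y)"
proof -
  have dD: "\<And>k. (D k has_real_derivative D (Suc k) y) (at y)"
    using smooth y unfolding smooth_derivs_halfline_def by (meson deriv_at_pos less_imp_le)
  have dW: "\<And>k. (W D True k has_real_derivative W D True (Suc k) y) (at y)"
    using W_deriv[OF smooth, of y] y by (meson deriv_at_pos less_imp_le order_refl)
  have 1: "((\<lambda>y. \<Sum>l\<le>n. of_nat (n choose l) * PP l y * D (n - l + 1) y) has_real_derivative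
     (\<Sum>l\<le>Suc n. of_nat (Suc n choose l) * PP l y * D (Suc n - l + 1) y)) (at y)"
    using leibniz[of n PP y UNIV "\<lambda>k. D (k+1)"] PP_deriv[OF y] dD by simp
  have 2: "((\<lambda>y. \<Sum>l\<le>n. of_nat (n choose l) * QQ l y * W D True (n - l) y) has_real_derivative
     (\<Sum>l\<le>Suc n. of_nat (Suc n choose l) * QQ l y * W D True (Suc n - l) y)) (at y)"
    using leibniz[of n QQ y UNIV "W D True"] QQ_deriv[OF y] dW by simp
  show ?thesis unfolding SS_def[abs_def]
    using DERIV_add[OF 1 2] by simp
qed

lemma SS_ident:
  assumes smooth: "smooth_derivs_halfline D" and D0: "D 0 = f"
    and ode: "\<And>y. y > 0 \<Longrightarrow>
      D 2 y + (2 / y - y / 2) * D 1 y - sin (2 * f y) / y ^ 2 = 0"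
  shows "y > 0 \<Longrightarrow> D (n + 2) y = SS D n y"
proof (induction n arbitrary: y)
  case 0
  then show ?case using ode[OF 0] D0
    by (simp add: SS_def PP_def QQ_def algebra_simps numeral_2_eq_2)
next
  case (Suc n)
  have "(D (n + 2) has_real_derivative SS D (Suc n) y) (at y)"
    by (rule has_field_derivative_transform_within_open[OF SS_deriv[OF smooth Suc.prems], of "{0<..}"])
       (use Suc in auto)
  moreover have "(D (n + 2) has_real_derivative D (Suc n + 2) y) (at y)"
    using smooth Suc.prems unfolding smooth_derivs_halfline_def by (simp add: deriv_at_pos)
  ultimately show ?case using DERIV_unique by blast
qed

lemma W_decay:
  assumes Dd: "\<And>k. 1 \<le> k \<Longrightarrow> k \<le> n \<Longrightarrow> decay (D k) (k + 2)"
  shows "i \<le> n \<Longrightarrow> decay (W D b i) i"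
proof (induction i arbitrary: b rule: less_induct)
  case (less i)
  show ?case
  proof (cases i)
    case 0
    show ?thesis unfolding 0 by (rule decay_bounded[of _ 1]) auto
  next
    case (Suc j)
    have t: "decay (\<lambda>y. of_nat (j choose l) * D (Suc l) y * W D (\<not> b) (j - l) y) (Suc j)"
      if l: "l \<in> {..j}" for l
    proof -
      have "decay (\<lambda>y. D (Suc l) y * W D (\<not> b) (j - l) y) (Suc l + 2 + (j - l))"
        using Suc l less.prems by (intro decay_mult Dd less.IH) auto
      then have "decay (\<lambda>y. D (Suc l) y * W D (\<not> b) (j - l) y) (Suc j)"
        by (rule decay_mono) (use l in auto)
      from decay_cmult[OF this, of "of_nat (j choose l)"] show ?thesis by (simp add: mult.assoc)
    qed
    have "decay (\<lambda>y. (if b then 2 else -2) *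
       (\<Sum>l\<le>j. of_nat (j choose l) * D (Suc l) y * W D (\<not> b) (j - l) y)) (Suc j)"
      by (intro decay_cmult decay_sum t) auto
    then show ?thesis unfolding Suc by (simp only: W.simps)
  qed
qed

lemma D_decay:
  assumes smooth: "smooth_derivs_halfline D" and D0: "D 0 = f"
    and ode: "\<And>y. y > 0 \<Longrightarrow>
      D 2 y + (2 / y - y / 2) * D 1 y - sin (2 * f y) / y ^ 2 = 0"
    and lim: "\<exists>L. (f \<longlongrightarrow> L) at_top"
  shows "\<forall>k. 1 \<le> k \<longrightarrow> k \<le> n \<longrightarrow> decay (D k) (k + 2)"
proof (induction n)
  case 0 then show ?case by simp
next
  case (Suc n)
  have IH: "\<And>k. 1 \<le> k \<Longrightarrow> k \<le> n \<Longrightarrow> decay (D k) (k + 2)" using Suc by blast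
  have Wd: "\<And>i. i \<le> n \<Longrightarrow> decay (W D True i) i" using W_decay[OF IH] by blast
  define r where "r y = (\<Sum>l\<in>{..n} - {0}. of_nat (n choose l) * PP l y * D (n - l + 1) y)
     + (\<Sum>l\<le>n. of_nat (n choose l) * QQ l y * W D True (n - l) y)" for y
  have rd: "decay r (n + 2)"
  proof -
    have a: "decay (\<lambda>y. of_nat (n choose l) * PP l y * D (n - l + 1) y) (n + 2)"
      if l: "l \<in> {..n} - {0}" for l
    proof -
      have "decay (\<lambda>y. PP l y * D (n - l + 1) y) ((l - 1) + (n - l + 1 + 2))"
        using l by (intro decay_mult PP_decay IH) auto
      then have "decay (\<lambda>y. PP l y * D (n - l + 1) y) (n + 2)"
        by (rule decay_mono) (use l in auto)
      from decay_cmult[OF this, of "of_nat (n choose l)"] show ?thesis by (simp add: mult.assoc)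
    qed
    have b: "decay (\<lambda>y. of_nat (n choose l) * QQ l y * W D True (n - l) y) (n + 2)"
      if l: "l \<in> {..n}" for l
    proof -
      have "decay (\<lambda>y. QQ l y * W D True (n - l) y) ((l + 2) + (n - l))"
        using l by (intro decay_mult QQ_decay Wd) auto
      then have "decay (\<lambda>y. QQ l y * W D True (n - l) y) (n + 2)"
        by (rule decay_mono) (use l in auto)
      from decay_cmult[OF this, of "of_nat (n choose l)"] show ?thesis by (simp add: mult.assoc)
    qed
    show ?thesis unfolding r_def[abs_def]
      by (intro decay_add decay_sum a b) auto
  qed
  obtain M where M: "M \<ge> 0" "\<And>y. y \<ge> 1 \<Longrightarrow> \<bar>r y\<bar> \<le> M / y^(n+2)" using rd by (metis decayE)
  have SSr: "SS D n y = (y/2 - 2/y) * D (Suc n) y + r y" for y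
  proof -
    have "(\<Sum>l\<le>n. of_nat (n choose l) * PP l y * D (n - l + 1) y)
       = of_nat (n choose 0) * PP 0 y * D (n - 0 + 1) y + (\<Sum>l\<in>{..n} - {0}. of_nat (n choose l) * PP l y * D (n - l + 1) y)"
      by (rule sum.remove) auto
    then show ?thesis unfolding SS_def r_def by (simp add: PP_def algebra_simps)
  qed
  have dg: "(D (Suc n) has_real_derivative ((y/2 - 2/y) * D (Suc n) y + r y)) (at y)" if y: "y \<ge> 1" for y
  proof -
    have "(D (Suc n) has_real_derivative D (n + 2) y) (at y)"
      using smooth y unfolding smooth_derivs_halfline_def by (simp add: deriv_at_pos)
    moreover have "D (n + 2) y = (y/2 - 2/y) * D (Suc n) y + r y"
      using SS_ident[OF smooth D0 ode, of y n] y SSr by simp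
    ultimately show ?thesis by simp
  qed
  have dG: "(D n has_real_derivative D (Suc n) y) (at y)" if y: "y \<ge> 1" for y
    using smooth y unfolding smooth_derivs_halfline_def by (simp add: deriv_at_pos)
  obtain Y B where Gb: "\<And>y. y \<ge> Y \<Longrightarrow> \<bar>D n y\<bar> \<le> B"
  proof (cases "n = 0")
    case True
    obtain L where L: "(f \<longlongrightarrow> L) at_top" using lim by blast
    have "\<forall>\<^sub>F y in at_top. dist (f y) L < 1" using tendstoD[OF L, of 1] by simp
    then obtain Y where Y: "\<And>y. y \<ge> Y \<Longrightarrow> dist (f y) L < 1" by (auto simp: eventually_at_top_linorder)
    have "\<bar>D n y\<bar> \<le> \<bar>L\<bar> + 1" if "y \<ge> Y" for y
      using Y[OF that] True D0 by (simp add: dist_real_def)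
    then show ?thesis using that by blast
  next
    case False
    obtain C where C: "C \<ge> 0" "\<And>y. y \<ge> 1 \<Longrightarrow> \<bar>D n y\<bar> \<le> C / y^(n+2)"
      using IH[of n] False by (metis decayE le_refl less_one not_le)
    have "\<bar>D n y\<bar> \<le> C" if y: "y \<ge> 1" for y
    proof -
      have "1 \<le> y^(n+2)" using y by (intro one_le_power)
      then have "C / y^(n+2) \<le> C" using C(1) by (simp add: divide_le_eq mult_le_cancel_left1 mult_le_cancel_left)
      then show ?thesis using C(2)[OF y] by linarith
    qed
    then show ?thesis using that by blast
  qed
  have "decay (D (Suc n)) (Suc n + 2)"
  proof -
    have "\<bar>D (Suc n) y\<bar> \<le> 2*M / y^(Suc (Suc (Suc n)))" if y: "y \<ge> 1" for y
    proof (rule compare_abs[where G = "D n" and r = r and M = M and m = "Suc n" and Y = Y and B = B])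
      show "\<And>y. 1 \<le> y \<Longrightarrow> \<bar>r y\<bar> \<le> M / y ^ Suc (Suc n)" using M(2) by simp
    qed (use dg dG Gb M y in auto)
    then show ?thesis unfolding decay_def by (intro exI[of _ "2*M"]) auto
  qed
  then show ?case using IH by (metis le_Suc_eq)
qed


theorem proposition1:
  fixes f :: "real \<Rightarrow> real" and D :: "nat \<Rightarrow> real \<Rightarrow> real"
  assumes smooth: "smooth_derivs_halfline D" and D0: "D 0 = f"
    and ode: "\<And>y. y > 0 \<Longrightarrow>
      D 2 y + (2 / y - y / 2) * D 1 y - sin (2 * f y) / y ^ 2 = 0"
    and init: "f 0 = 0"
    and lim: "\<exists>L. (f \<longlongrightarrow> L) at_top"
  shows "(\<forall>k. D (2 * k) 0 = 0) \<and>
         (\<forall>k\<ge>1. \<exists>C>0. \<forall>y\<ge>1. \<bar>D k y\<bar> \<le> C * y powr (- (2 + real k)))"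
proof (intro conjI allI impI)
  fix k :: nat
  have ev: "even (2 * k)" by simp
  show "D (2 * k) 0 = 0" by (rule even_derivs_zero[OF smooth D0 ode init ev])
next
  fix k :: nat assume k: "k \<ge> 1"
  have "decay (D k) (k + 2)" using D_decay[OF smooth D0 ode lim, of k] k by simp
  then obtain C where C: "C \<ge> 0" "\<And>y. y \<ge> 1 \<Longrightarrow> \<bar>D k y\<bar> \<le> C / y^(k+2)" by (metis decayE)
  have "\<bar>D k y\<bar> \<le> (C + 1) * y powr (- (2 + real k))" if y: "y \<ge> 1" for y
  proof -
    have yp: "y > 0" using y by simp
    have r: "2 + real k = real (k + 2)" by simp
    have "y powr (- (2 + real k)) = inverse (y powr (2 + real k))"
      by (rule powr_minus)
    also have "\<dots> = inverse (y powr (real (k + 2)))" by (simp only: r)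
    also have "\<dots> = inverse (y ^ (k + 2))" by (simp only: powr_realpow[OF yp])
    finally have e: "y powr (- (2 + real k)) = 1 / y ^ (k + 2)" by (simp add: divide_inverse)
    have "C / y^(k+2) \<le> (C + 1) / y^(k+2)" using yp by (simp add: divide_right_mono)
    then show ?thesis using C(2)[OF y] unfolding e by simp
  qed
  moreover have "C + 1 > 0" using C by simp
  ultimately show "\<exists>C>0. \<forall>y\<ge>1. \<bar>D k y\<bar> \<le> C * y powr (- (2 + real k))" by blast
qed

end
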